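(* Let $\mathcal M=(\mathbf M^{(\lambda)})_{\lambda>0}$, $\mathbf M^{(\lambda)}=(M^{(\lambda)}_p)_{p\in\mathbb N_0}$, be a weight matrix in dimension $d=1$ such that for every $\lambda>0$: $(M^{(\lambda)}_p)^2\le M^{(\lambda)}_{p-1}M^{(\lambda)}_{p+1}$ for all $p\in\mathbb N$, and $\lim_{p\to\infty}(M^{(\lambda)}_p)^{1/p}=+\infty$. Assume moreover that $\mu^{(\lambda)}_p:=M^{(\lambda)}_p/M^{(\lambda)}_{p-1}$ ($p\in\mathbb N$), $\mu^{(\lambda)}_0:=1$, satisfy $\mu^{(\lambda)}_p\le\mu^{(\kappa)}_p$ for all $p$ whenever $0<\lambda\le\kappa$. Then $\Lambda_{(\mathcal M)}$ is nuclear if and only if for every $\lambda>0$ there exist $0<\kappa\le\lambda$ and $A\ge1$ with $M^{(\kappa)}_{p+1}\le A^{p+1}M^{(\lambda)}_p$ for all $p\in\mathbb N_0$.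
   Context: A weight matrix (here $d=1$) is a family $(\mathbf M^{(\lambda)})_{\lambda>0}$ of sequences of positive reals $(M^{(\lambda)}_p)_{p\in\mathbb N_0}$ with $M^{(\lambda)}_0=1$ and $M^{(\lambda)}_p\le M^{(\kappa)}_p$ for all $p$ whenever $0<\lambda\le\kappa$. The associated function of $\mathbf M=(M_p)$ is $\omega_{\mathbf M}(t)=\sup_{p\in\mathbb N_0}\log\frac{|t|^p}{M_p}$ (with $0^0=1$). With $\|\mathbf c\|_{\mathbf M,h}:=\sup_{k\in\mathbb N_0}|c_k|e^{\omega_{\mathbf M}(k^{1/2}/h)}$, $\Lambda_{(\mathcal M)}$ is the space of sequences $\mathbf c=(c_k)_{k\in\mathbb N_0}$ with $\|\mathbf c\|_{\mathbf M^{(\lambda)},h}<\infty$ for all $\lambda,h>0$, with the Fréchet topology given by the norms $\|\cdot\|_{\mathbf M^{(1/j)},1/j}$, $j\in\mathbb N$. *)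

theory Defs
  imports "HOL-Analysis.Analysis"
begin

definition assoc_fun :: "(nat \<Rightarrow> real) \<Rightarrow> real \<Rightarrow> real" where
  "assoc_fun M t = (SUP p. ln (\<bar>t\<bar> ^ p / M p))"

definition seq_norm :: "(nat \<Rightarrow> real) \<Rightarrow> real \<Rightarrow> (nat \<Rightarrow> complex) \<Rightarrow> real" where
  "seq_norm M h c = (SUP k. cmod (c k) * exp (assoc_fun M (sqrt (real k) / h)))"

definition Lambda_Beur :: "(real \<Rightarrow> nat \<Rightarrow> real) \<Rightarrow> (nat \<Rightarrow> complex) set" where
  "Lambda_Beur MM = {c. \<forall>lam>0. \<forall>h>0.
      bdd_above (range (\<lambda>k. cmod (c k) * exp (assoc_fun (MM lam) (sqrt (real k) / h))))}"

text \<open>The fundamental system of norms  ||.||_{M^(1/j),1/j},  j = 1,2,...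
  (indexed here by j = Suc i).\<close>
definition Lambda_norms :: "(real \<Rightarrow> nat \<Rightarrow> real) \<Rightarrow> nat \<Rightarrow> (nat \<Rightarrow> complex) \<Rightarrow> real" where
  "Lambda_norms MM i c = seq_norm (MM (1 / real (Suc i))) (1 / real (Suc i)) c"

text \<open>Nuclearity of a (metrizable) locally convex space given by a vector space V
  and a countable fundamental system of seminorms p_0, p_1, ...: for every j there is l
  such that the canonical map E_l -> E_j is quasi-nuclear, i.e. there are linear
  functionals f_n on V with |f_n x| <= c_n p_l(x), sum c_n < infinity, and
  p_j(x) <= sum_n |f_n x| (Pietsch).\<close>
definition nuclear_lcs :: "(nat \<Rightarrow> complex) set \<Rightarrow> (nat \<Rightarrow> (nat \<Rightarrow> complex) \<Rightarrow> real) \<Rightarrow> bool" where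
  "nuclear_lcs V p \<longleftrightarrow> (\<forall>j. \<exists>l. \<exists>f :: nat \<Rightarrow> (nat \<Rightarrow> complex) \<Rightarrow> complex. \<exists>c :: nat \<Rightarrow> real.
      (\<forall>n. \<forall>x\<in>V. \<forall>y\<in>V. f n (\<lambda>k. x k + y k) = f n x + f n y) \<and>
      (\<forall>n. \<forall>a. \<forall>x\<in>V. f n (\<lambda>k. a * x k) = a * f n x) \<and>
      (\<forall>n. c n \<ge> 0) \<and> summable c \<and>
      (\<forall>n. \<forall>x\<in>V. cmod (f n x) \<le> c n * p l x) \<and>
      (\<forall>x\<in>V. p j x \<le> (\<Sum>n. cmod (f n x))))"

end

theory Submission
  imports Defs
begin



locale wmx =
  fixes MM :: "real \<Rightarrow> nat \<Rightarrow> real"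
  assumes pos: "\<And>lam p. lam > 0 \<Longrightarrow> MM lam p > 0"
    and zero: "\<And>lam. lam > 0 \<Longrightarrow> MM lam 0 = 1"
    and mono: "\<And>lam \<kappa> p. 0 < lam \<Longrightarrow> lam \<le> \<kappa> \<Longrightarrow> MM lam p \<le> MM \<kappa> p"
    and logconv: "\<And>lam p. lam > 0 \<Longrightarrow> p \<ge> 1 \<Longrightarrow>
                    (MM lam p)\<^sup>2 \<le> MM lam (p - 1) * MM lam (p + 1)"
    and root: "\<And>lam. lam > 0 \<Longrightarrow>
                 filterlim (\<lambda>p. MM lam p powr (1 / real p)) at_top sequentially"
begin

lemma W_bdd:
  assumes "lam > 0"
  shows "bdd_above (range (\<lambda>p. ln (\<bar>t\<bar> ^ p / MM lam p)))"
proof -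
  have "eventually (\<lambda>p. MM lam p powr (1 / real p) \<ge> \<bar>t\<bar> + 1) sequentially"
    using root[OF assms] by (simp add: filterlim_at_top)
  moreover have "eventually (\<lambda>p. p \<ge> 1) sequentially" by (simp add: eventually_ge_at_top)
  ultimately have "eventually (\<lambda>p. ln (\<bar>t\<bar> ^ p / MM lam p) \<le> 0) sequentially"
  proof eventually_elim
    case (elim p)
    have mp: "MM lam p > 0" using pos assms by auto
    have "(MM lam p powr (1 / real p)) ^ p = (MM lam p powr (1 / real p)) powr (real p)"
      using mp by (simp add: powr_realpow)
    also have "\<dots> = MM lam p" using mp elim(2) by (simp add: powr_powr)
    finally have "(MM lam p powr (1 / real p)) ^ p = MM lam p" .
    moreover have "(\<bar>t\<bar> + 1) ^ p \<le> (MM lam p powr (1 / real p)) ^ p"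
      using elim(1) by (intro power_mono) auto
    moreover have "\<bar>t\<bar> ^ p \<le> (\<bar>t\<bar> + 1) ^ p" by (intro power_mono) auto
    ultimately have "\<bar>t\<bar> ^ p / MM lam p \<le> 1" using mp by simp
    moreover have "\<bar>t\<bar> ^ p / MM lam p \<ge> 0" using mp by simp
    ultimately show ?case
    proof (cases "\<bar>t\<bar> ^ p / MM lam p = 0")
      case True then show ?thesis by (simp only: True ln_0)
    next
      case False
      then have "\<bar>t\<bar> ^ p / MM lam p > 0" using \<open>\<bar>t\<bar> ^ p / MM lam p \<ge> 0\<close>
        by linarith
      then show ?thesis using \<open>\<bar>t\<bar> ^ p / MM lam p \<le> 1\<close> by (simp only: ln_le_zero_iff)
    qed
  qed
  then obtain N where N: "\<And>p. p \<ge> N \<Longrightarrow> ln (\<bar>t\<bar> ^ p / MM lam p) \<le> 0"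
    by (auto simp: eventually_sequentially)
  have "range (\<lambda>p. ln (\<bar>t\<bar> ^ p / MM lam p)) \<subseteq> (\<lambda>p. ln (\<bar>t\<bar> ^ p / MM lam p)) ` {..<N} \<union> {..0}"
  proof
    fix y assume "y \<in> range (\<lambda>p. ln (\<bar>t\<bar> ^ p / MM lam p))"
    then obtain p where y: "y = ln (\<bar>t\<bar> ^ p / MM lam p)" by auto
    show "y \<in> (\<lambda>p. ln (\<bar>t\<bar> ^ p / MM lam p)) ` {..<N} \<union> {..0}"
    proof (cases "p < N")
      case True then show ?thesis using y by auto
    next
      case False then show ?thesis using y N[of p] by auto
    qed
  qed
  moreover have "bdd_above ((\<lambda>p. ln (\<bar>t\<bar> ^ p / MM lam p)) ` {..<N} \<union> {..0})"
    by (simp add: bdd_above_Un)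
  ultimately show ?thesis by (metis bdd_above_mono)
qed

lemma W_upper:
  assumes "lam > 0"
  shows "ln (\<bar>t\<bar> ^ p / MM lam p) \<le> assoc_fun (MM lam) t"
  unfolding assoc_fun_def by (rule cSUP_upper[OF _ W_bdd[OF assms]]) auto

lemma W_nonneg:
  assumes "lam > 0"
  shows "0 \<le> assoc_fun (MM lam) t"
  using W_upper[OF assms, of t 0] zero[OF assms] by simp

lemma W_least:
  assumes "\<And>p. ln (\<bar>t\<bar> ^ p / MM lam p) \<le> C"
  shows "assoc_fun (MM lam) t \<le> C"
  unfolding assoc_fun_def by (rule cSUP_least) (auto intro: assms)

lemma ln_le_aux:
  fixes x y W :: real
  assumes "0 \<le> x" "x \<le> y" "ln y \<le> W" "0 \<le> W"
  shows "ln x \<le> W"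
proof (cases "x = 0")
  case True then show ?thesis using assms by simp
next
  case False
  then have "0 < x" using assms(1) by linarith
  then have "ln x \<le> ln y" using assms(2) by (subst ln_le_cancel_iff) auto
  then show ?thesis using assms(3) by linarith
qed

lemma W_mono_t:
  assumes "lam > 0" "0 \<le> s" "s \<le> t"
  shows "assoc_fun (MM lam) s \<le> assoc_fun (MM lam) t"
proof (rule W_least)
  fix p
  have mp: "MM lam p > 0" using pos assms by auto
  show "ln (\<bar>s\<bar> ^ p / MM lam p) \<le> assoc_fun (MM lam) t"
  proof (rule ln_le_aux)
    show "\<bar>s\<bar> ^ p / MM lam p \<le> \<bar>t\<bar> ^ p / MM lam p"
      using mp assms by (intro divide_right_mono power_mono) auto
  qed (use mp W_upper[OF assms(1)] W_nonneg[OF assms(1)] in auto)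
qed

lemma W_mono_lam:
  assumes "0 < lam" "lam \<le> k"
  shows "assoc_fun (MM k) t \<le> assoc_fun (MM lam) t"
proof (rule W_least)
  fix p
  have mp: "MM lam p > 0" "MM k p > 0" using pos assms by auto
  show "ln (\<bar>t\<bar> ^ p / MM k p) \<le> assoc_fun (MM lam) t"
  proof (rule ln_le_aux)
    show "\<bar>t\<bar> ^ p / MM k p \<le> \<bar>t\<bar> ^ p / MM lam p"
      using mp assms mono[OF assms] by (intro divide_left_mono) auto
  qed (use mp W_upper[OF assms(1)] W_nonneg[OF assms(1)] in auto)
qed

lemma W_exp_upper:
  assumes "lam > 0"
  shows "\<bar>t\<bar> ^ p / MM lam p \<le> exp (assoc_fun (MM lam) t)"
proof (cases "\<bar>t\<bar> ^ p / MM lam p = 0")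
  case True then show ?thesis by (simp only: True) simp
next
  case False
  have "\<bar>t\<bar> ^ p / MM lam p \<ge> 0" using pos[OF assms, of p] by simp
  then have "\<bar>t\<bar> ^ p / MM lam p > 0" using False by linarith
  then show ?thesis using W_upper[OF assms, of t p]
    by (smt (verit) exp_le_cancel_iff exp_ln)
qed

end



context wmx begin

lemma W_shift:
  assumes k: "k > 0" and l: "lam > 0" and A: "A \<ge> 1"
    and H: "\<And>p. MM k (p + 1) \<le> A ^ (p + 1) * MM lam p" and t: "t > 0"
  shows "assoc_fun (MM lam) t + ln t \<le> assoc_fun (MM k) (A * t)"
proof -
  have "assoc_fun (MM lam) t \<le> assoc_fun (MM k) (A * t) - ln t"
  proof (rule W_least)
    fix p
    have m1: "MM k (p + 1) > 0" "MM lam p > 0" using pos k l by auto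
    have "t ^ (p + 1) / MM lam p \<le> (A * t) ^ (p + 1) / MM k (p + 1)"
    proof -
      have "t ^ (p + 1) * MM k (p + 1) \<le> t ^ (p + 1) * (A ^ (p + 1) * MM lam p)"
        using H[of p] t by (intro mult_left_mono) auto
      then show ?thesis using m1 by (simp add: field_simps power_mult_distrib)
    qed
    then have "ln (t ^ (p + 1) / MM lam p) \<le> ln ((A * t) ^ (p + 1) / MM k (p + 1))"
      using m1 t A by (subst ln_le_cancel_iff) auto
    also have "\<dots> \<le> assoc_fun (MM k) (A * t)"
      using W_upper[OF k, of "A * t" "p + 1"] A t by simp
    finally have "ln (t ^ (p + 1) / MM lam p) \<le> assoc_fun (MM k) (A * t)" .
    moreover have "ln (t ^ (p + 1) / MM lam p) = ln (\<bar>t\<bar> ^ p / MM lam p) + ln t"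
      using m1 t by (simp add: ln_div ln_mult)
    ultimately show "ln (\<bar>t\<bar> ^ p / MM lam p) \<le> assoc_fun (MM k) (A * t) - ln t" by simp
  qed
  then show ?thesis by simp
qed

lemma W_iter:
  assumes C: "\<forall>lam>0. \<exists>\<kappa>. 0 < \<kappa> \<and> \<kappa> \<le> lam \<and>
            (\<exists>A\<ge>1. \<forall>p. MM \<kappa> (p + 1) \<le> A ^ (p + 1) * MM lam p)"
    and l: "lam > 0"
  shows "\<exists>k A. 0 < k \<and> k \<le> lam \<and> A \<ge> 1 \<and>
           (\<forall>t\<ge>1. assoc_fun (MM lam) t + real m * ln t \<le> assoc_fun (MM k) (A * t))"
proof (induction m)
  case 0
  show ?case using l by (intro exI[of _ lam] exI[of _ 1]) auto
next
  case (Suc m)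
  then obtain k A where kA: "0 < k" "k \<le> lam" "A \<ge> 1"
    "\<And>t. t \<ge> 1 \<Longrightarrow> assoc_fun (MM lam) t + real m * ln t \<le> assoc_fun (MM k) (A * t)"
    by blast
  from C kA(1) obtain k' A' where k': "0 < k'" "k' \<le> k" "A' \<ge> 1"
    "\<And>p. MM k' (p + 1) \<le> A' ^ (p + 1) * MM k p" by blast
  show ?case
  proof (rule exI[of _ k'], rule exI[of _ "A' * A"], intro conjI allI impI)
    show "0 < k'" "k' \<le> lam" using k' kA by auto
    show "1 \<le> A' * A" using mult_mono[of 1 A' 1 A] k'(3) kA(3) by simp
    fix t :: real assume t: "t \<ge> 1"
    have At: "A * t \<ge> t" using mult_right_mono[of 1 A t] kA(3) t by simp
    have "assoc_fun (MM lam) t + real (Suc m) * ln t = (assoc_fun (MM lam) t + real m * ln t) + ln t"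
      by (simp add: algebra_simps)
    also have "\<dots> \<le> assoc_fun (MM k) (A * t) + ln (A * t)"
      using kA(4)[OF t] At t by (intro add_mono) auto
    also have "\<dots> \<le> assoc_fun (MM k') (A' * (A * t))"
      using W_shift[OF k'(1) kA(1) k'(3) k'(4)] At t by auto
    finally show "assoc_fun (MM lam) t + real (Suc m) * ln t \<le> assoc_fun (MM k') (A' * A * t)"
      by (simp add: mult.assoc)
  qed
qed

definition aw :: "nat \<Rightarrow> nat \<Rightarrow> real" where
  "aw i k = exp (assoc_fun (MM (1 / real (Suc i))) (sqrt (real k) / (1 / real (Suc i))))"

lemma cond_summable:
  assumes C: "\<forall>lam>0. \<exists>\<kappa>. 0 < \<kappa> \<and> \<kappa> \<le> lam \<and>
            (\<exists>A\<ge>1. \<forall>p. MM \<kappa> (p + 1) \<le> A ^ (p + 1) * MM lam p)"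
  shows "\<exists>l. summable (\<lambda>k. aw j k / aw l k)"
proof -
  define lam0 where "lam0 = 1 / real (Suc j)"
  have l0: "lam0 > 0" by (simp add: lam0_def)
  obtain k A where kA: "0 < k" "k \<le> lam0" "A \<ge> 1"
    "\<And>t. t \<ge> 1 \<Longrightarrow> assoc_fun (MM lam0) t + real 4 * ln t \<le> assoc_fun (MM k) (A * t)"
    using W_iter[OF C l0, of 4] by blast
  define l where "l = nat \<lceil>A * real (Suc j) + 1 / k\<rceil>"
  have lA: "real (Suc l) \<ge> A * real (Suc j)" and lk: "real (Suc l) \<ge> 1 / k"
  proof -
    have c: "A * real (Suc j) + 1 / k \<le> real (nat \<lceil>A * real (Suc j) + 1 / k\<rceil>)"
      by (rule real_nat_ceiling_ge)
    have "1 / k > 0" "A * real (Suc j) \<ge> 0" using kA by auto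
    then show "real (Suc l) \<ge> A * real (Suc j)" "real (Suc l) \<ge> 1 / k"
      using c unfolding l_def by linarith+
  qed
  have lk': "1 / real (Suc l) \<le> k"
  proof -
    have "1 \<le> k * real (Suc l)" using lk kA(1) by (simp add: divide_le_eq mult.commute)
    then show ?thesis by (simp add: divide_le_eq mult.commute)
  qed
  show ?thesis
  proof (intro exI[of _ l] summable_comparison_test_ev[OF _ inverse_power_summable[of 2]])
    show "eventually (\<lambda>n. norm (aw j n / aw l n) \<le> inverse (real n ^ 2)) sequentially"
      using eventually_ge_at_top[of "1::nat"]
    proof eventually_elim
      case (elim n)
      define t where "t = sqrt (real n) * real (Suc j)"
      have sq1: "sqrt (real n) \<ge> 1" using elim by simp
      have t1: "t \<ge> 1" using mult_mono[OF sq1, of 1 "real (Suc j)"] unfolding t_def by simp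
      have At: "A * t = sqrt (real n) * (A * real (Suc j))" by (simp add: t_def algebra_simps)
      have "assoc_fun (MM lam0) t + 4 * ln t \<le> assoc_fun (MM k) (A * t)" using kA(4)[OF t1] by simp
      also have "\<dots> \<le> assoc_fun (MM k) (sqrt (real n) * real (Suc l))"
      proof (rule W_mono_t)
        show "0 \<le> A * t" using kA t1 by simp
        show "A * t \<le> sqrt (real n) * real (Suc l)" unfolding At
          using lA by (intro mult_left_mono) auto
      qed (use kA in auto)
      also have "\<dots> \<le> assoc_fun (MM (1 / real (Suc l))) (sqrt (real n) * real (Suc l))"
        using lk' by (intro W_mono_lam) auto
      finally have D: "assoc_fun (MM lam0) t - assoc_fun (MM (1 / real (Suc l))) (sqrt (real n) * real (Suc l)) \<le> - 4 * ln t"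
        by simp
      have "aw j n / aw l n = exp (assoc_fun (MM lam0) t - assoc_fun (MM (1 / real (Suc l))) (sqrt (real n) * real (Suc l)))"
        unfolding aw_def t_def lam0_def by (simp add: exp_diff)
      also have "\<dots> \<le> exp (- 4 * ln t)" using D by simp
      also have "\<dots> = inverse (t ^ 4)"
      proof -
        have "exp (- 4 * ln t) = inverse (t powr 4)" using t1 by (simp add: powr_def exp_minus)
        also have "t powr 4 = t ^ 4" using t1 by (simp add: powr_numeral)
        finally show ?thesis .
      qed
      also have "\<dots> \<le> inverse (real n ^ 2)"
      proof -
        have "sqrt (real n) ^ 4 = (sqrt (real n) ^ 2) ^ 2" by algebra
        then have "sqrt (real n) ^ 4 = real n ^ 2" by simp
        then have "t ^ 4 = real n ^ 2 * real (Suc j) ^ 4" unfolding t_def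
          by (simp add: power_mult_distrib)
        moreover have "real (Suc j) ^ 4 \<ge> 1" by simp
        moreover have "real n ^ 2 > 0" using elim by simp
        ultimately have "t ^ 4 \<ge> real n ^ 2" by simp
        then show ?thesis using elim by (intro le_imp_inverse_le) auto
      qed
      finally show ?case by (simp add: aw_def)
    qed
  qed simp
qed

end



context wmx begin

lemma aw_pos: "aw i k > 0" by (simp add: aw_def)

lemma norms_eq: "Lambda_norms MM i x = (SUP k. cmod (x k) * aw i k)"
  by (simp add: Lambda_norms_def seq_norm_def aw_def)

lemma bdd_V:
  assumes "x \<in> Lambda_Beur MM"
  shows "bdd_above (range (\<lambda>k. cmod (x k) * aw i k))"
proof -
  have H: "\<And>lam h. lam > 0 \<Longrightarrow> h > 0 \<Longrightarrow>
     bdd_above (range (\<lambda>k. cmod (x k) * exp (assoc_fun (MM lam) (sqrt (real k) / h))))"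
    using assms by (simp add: Lambda_Beur_def)
  show ?thesis unfolding aw_def by (rule H) auto
qed

lemma upper_V: "x \<in> Lambda_Beur MM \<Longrightarrow> cmod (x k) * aw i k \<le> Lambda_norms MM i x"
  unfolding norms_eq by (rule cSUP_upper[OF _ bdd_V]) auto

lemma fin_in_V:
  assumes "\<And>k. k \<ge> K \<Longrightarrow> x k = 0"
  shows "x \<in> Lambda_Beur MM"
  unfolding Lambda_Beur_def
proof (intro CollectI allI impI)
  fix lam h :: real
  let ?g = "\<lambda>k. cmod (x k) * exp (assoc_fun (MM lam) (sqrt (real k) / h))"
  have "range ?g \<subseteq> ?g ` {..<K} \<union> {0}"
  proof
    fix y assume "y \<in> range ?g"
    then obtain k where y: "y = ?g k" by auto
    show "y \<in> ?g ` {..<K} \<union> {0}"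
    proof (cases "k < K")
      case True then show ?thesis using y by auto
    next
      case False then show ?thesis using y assms[of k] by auto
    qed
  qed
  moreover have "bdd_above (?g ` {..<K} \<union> {0})" by (simp add: bdd_above_Un)
  ultimately show "bdd_above (range ?g)" by (rule bdd_above_mono[rotated])
qed

lemma summable_nuclear:
  assumes S: "\<And>j. \<exists>l. summable (\<lambda>k. aw j k / aw l k)"
  shows "nuclear_lcs (Lambda_Beur MM) (Lambda_norms MM)"
  unfolding nuclear_lcs_def
proof
  fix j
  obtain l where l: "summable (\<lambda>k. aw j k / aw l k)" using S by blast
  define f where "f = (\<lambda>n (x :: nat \<Rightarrow> complex). x n * complex_of_real (aw j n))"
  define c where "c = (\<lambda>k. aw j k / aw l k)"
  have fb: "cmod (f n x) \<le> c n * Lambda_norms MM l x" if x: "x \<in> Lambda_Beur MM" for n x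
  proof -
    have "cmod (f n x) = c n * (cmod (x n) * aw l n)"
      using aw_pos[of j n] aw_pos[of l n] by (simp add: f_def c_def norm_mult)
    also have "\<dots> \<le> c n * Lambda_norms MM l x"
      using upper_V[OF x, of n l] aw_pos[of j n] aw_pos[of l n] unfolding c_def
      by (intro mult_left_mono) auto
    finally show ?thesis .
  qed
  show "\<exists>l f c. (\<forall>n. \<forall>x\<in>Lambda_Beur MM. \<forall>y\<in>Lambda_Beur MM. f n (\<lambda>k. x k + y k) = f n x + f n y) \<and>
      (\<forall>n a. \<forall>x\<in>Lambda_Beur MM. f n (\<lambda>k. a * x k) = a * f n x) \<and>
      (\<forall>n. 0 \<le> c n) \<and> summable c \<and>
      (\<forall>n. \<forall>x\<in>Lambda_Beur MM. cmod (f n x) \<le> c n * Lambda_norms MM l x) \<and>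
      (\<forall>x\<in>Lambda_Beur MM. Lambda_norms MM j x \<le> (\<Sum>n. cmod (f n x)))"
  proof (intro exI[of _ l] exI[of _ f] exI[of _ c] conjI ballI allI)
    show "f n (\<lambda>k. x k + y k) = f n x + f n y" for n x y by (simp add: f_def algebra_simps)
    show "f n (\<lambda>k. a * x k) = a * f n x" for n a x by (simp add: f_def algebra_simps)
    show "0 \<le> c n" for n using aw_pos[of j n] aw_pos[of l n] by (simp add: c_def)
    show "summable c" using l by (simp add: c_def)
    show "cmod (f n x) \<le> c n * Lambda_norms MM l x" if "x \<in> Lambda_Beur MM" for n x
      using fb[OF that] .
    fix x assume x: "x \<in> Lambda_Beur MM"
    have "summable (\<lambda>n. c n * Lambda_norms MM l x)" using l unfolding c_def by (rule summable_mult2)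
    then have sm: "summable (\<lambda>n. cmod (f n x))"
      by (rule summable_comparison_test'[of _ 0]) (use fb[OF x] in simp)
    show "Lambda_norms MM j x \<le> (\<Sum>n. cmod (f n x))"
      unfolding norms_eq
    proof (rule cSUP_least)
      fix k
      have "cmod (x k) * aw j k = cmod (f k x)" using aw_pos[of j k] by (simp add: f_def norm_mult)
      also have "\<dots> = (\<Sum>n\<in>{k}. cmod (f n x))" by simp
      also have "\<dots> \<le> (\<Sum>n. cmod (f n x))" by (rule sum_le_suminf[OF sm]) auto
      finally show "cmod (x k) * aw j k \<le> (\<Sum>n. cmod (f n x))" .
    qed auto
  qed
qed

end



context wmx begin

definition ev :: "nat \<Rightarrow> nat \<Rightarrow> complex" where
  "ev k = (\<lambda>i. if i = k then 1 else 0)"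

lemma ev_in_V: "ev k \<in> Lambda_Beur MM"
  by (rule fin_in_V[where K="Suc k"]) (auto simp: ev_def)

lemma combo_in_V: "(\<lambda>i. \<Sum>k<K. \<alpha> k * ev k i) \<in> Lambda_Beur MM"
  by (rule fin_in_V[where K=K]) (auto simp: ev_def)

lemma linear_combo:
  assumes add: "\<forall>x\<in>Lambda_Beur MM. \<forall>y\<in>Lambda_Beur MM. g (\<lambda>k. x k + y k) = g x + g y"
    and hom: "\<forall>a. \<forall>x\<in>Lambda_Beur MM. g (\<lambda>k. a * x k) = a * g x"
  shows "g (\<lambda>i. \<Sum>k<K. \<alpha> k * ev k i) = (\<Sum>k<K. \<alpha> k * g (ev k))"
proof (induction K)
  case 0
  have "g (\<lambda>k. 0 * ev 0 k) = 0 * g (ev 0)" using hom ev_in_V by blast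
  then show ?case by simp
next
  case (Suc K)
  have "g (\<lambda>i. \<Sum>k<Suc K. \<alpha> k * ev k i) = g (\<lambda>i. (\<Sum>k<K. \<alpha> k * ev k i) + \<alpha> K * ev K i)"
    by simp
  also have "\<dots> = g (\<lambda>i. \<Sum>k<K. \<alpha> k * ev k i) + g (\<lambda>i. \<alpha> K * ev K i)"
  proof -
    have B: "(\<lambda>i. \<alpha> K * ev K i) \<in> Lambda_Beur MM"
      by (rule fin_in_V[where K="Suc K"]) (simp add: ev_def)
    show ?thesis using add[rule_format, OF combo_in_V B] .
  qed
  also have "g (\<lambda>i. \<alpha> K * ev K i) = \<alpha> K * g (ev K)" using hom ev_in_V by blast
  finally show ?case using Suc by simp
qed

lemma nuclear_bounded:
  assumes N: "nuclear_lcs (Lambda_Beur MM) (Lambda_norms MM)"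
  shows "\<exists>l S. \<forall>K. (\<Sum>k<K. aw j k / aw l k) \<le> S"
proof -
  have "\<exists>l f c. (\<forall>n. \<forall>x\<in>Lambda_Beur MM. \<forall>y\<in>Lambda_Beur MM. f n (\<lambda>k. x k + y k) = f n x + f n y) \<and>
      (\<forall>n. \<forall>a. \<forall>x\<in>Lambda_Beur MM. f n (\<lambda>k. a * x k) = a * f n x) \<and>
      (\<forall>n. c n \<ge> 0) \<and> summable c \<and>
      (\<forall>n. \<forall>x\<in>Lambda_Beur MM. cmod (f n x) \<le> c n * Lambda_norms MM l x) \<and>
      (\<forall>x\<in>Lambda_Beur MM. Lambda_norms MM j x \<le> (\<Sum>n. cmod (f n x)))"
    using N unfolding nuclear_lcs_def by (rule spec)
  then obtain l and f :: "nat \<Rightarrow> (nat \<Rightarrow> complex) \<Rightarrow> complex" and c :: "nat \<Rightarrow> real" where H: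
     "(\<forall>n. \<forall>x\<in>Lambda_Beur MM. \<forall>y\<in>Lambda_Beur MM. f n (\<lambda>k. x k + y k) = f n x + f n y) \<and>
      (\<forall>n. \<forall>a. \<forall>x\<in>Lambda_Beur MM. f n (\<lambda>k. a * x k) = a * f n x) \<and>
      (\<forall>n. c n \<ge> 0) \<and> summable c \<and>
      (\<forall>n. \<forall>x\<in>Lambda_Beur MM. cmod (f n x) \<le> c n * Lambda_norms MM l x) \<and>
      (\<forall>x\<in>Lambda_Beur MM. Lambda_norms MM j x \<le> (\<Sum>n. cmod (f n x)))"
    by (elim exE)
  note add = H[THEN conjunct1]
  note hom = H[THEN conjunct2, THEN conjunct1]
  note c0 = H[THEN conjunct2, THEN conjunct2, THEN conjunct1]
  note cs = H[THEN conjunct2, THEN conjunct2, THEN conjunct2, THEN conjunct1]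
  note fb = H[THEN conjunct2, THEN conjunct2, THEN conjunct2, THEN conjunct2, THEN conjunct1]
  note pj = H[THEN conjunct2, THEN conjunct2, THEN conjunct2, THEN conjunct2, THEN conjunct2]
  have sme: "summable (\<lambda>n. cmod (f n (ev k)))" for k
  proof -
    have "summable (\<lambda>n. c n * Lambda_norms MM l (ev k))" using cs by (rule summable_mult2)
    then show ?thesis
      by (rule summable_comparison_test'[of _ 0]) (use fb ev_in_V in simp)
  qed
  have ajk: "aw j k \<le> (\<Sum>n. cmod (f n (ev k)))" for k
  proof -
    have "aw j k = cmod (ev k k) * aw j k" by (simp add: ev_def)
    also have "\<dots> \<le> Lambda_norms MM j (ev k)" by (rule upper_V[OF ev_in_V])
    also have "\<dots> \<le> (\<Sum>n. cmod (f n (ev k)))" using pj ev_in_V by blast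
    finally show ?thesis .
  qed
  have rowb: "(\<Sum>k<K. cmod (f n (ev k)) / aw l k) \<le> c n" for n K
  proof -
    define \<alpha> where "\<alpha> = (\<lambda>k. (if f n (ev k) = 0 then 0 else cnj (f n (ev k)) / of_real (cmod (f n (ev k))))
        / of_real (aw l k))"
    define x where "x = (\<lambda>i. \<Sum>k<K. \<alpha> k * ev k i)"
    have xV: "x \<in> Lambda_Beur MM" unfolding x_def by (rule combo_in_V)
    have fx: "f n x = (\<Sum>k<K. \<alpha> k * f n (ev k))"
      unfolding x_def by (rule linear_combo) (use add hom in auto)
    have tm: "\<alpha> k * f n (ev k) = of_real (cmod (f n (ev k)) / aw l k)" for k
    proof (cases "f n (ev k) = 0")
      case True then show ?thesis by (simp add: \<alpha>_def)
    next
      case False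
      have "cnj (f n (ev k)) * f n (ev k) = of_real ((cmod (f n (ev k)))^2)"
        by (simp add: complex_norm_square[symmetric] mult.commute del: of_real_power)
      note cc = this
      have a0: "aw l k > 0" by (rule aw_pos)
      have "\<alpha> k * f n (ev k) = (cnj (f n (ev k)) * f n (ev k)) / (of_real (cmod (f n (ev k))) * of_real (aw l k))"
        using False by (simp add: \<alpha>_def)
      also have "\<dots> = of_real ((cmod (f n (ev k)))^2 / (cmod (f n (ev k)) * aw l k))"
        unfolding cc by simp
      also have "(cmod (f n (ev k)))^2 / (cmod (f n (ev k)) * aw l k) = cmod (f n (ev k)) / aw l k"
        using False a0 by (simp add: power2_eq_square)
      finally show ?thesis .
    qed
    have "f n x = of_real (\<Sum>k<K. cmod (f n (ev k)) / aw l k)" unfolding fx tm by simp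
    moreover have "(\<Sum>k<K. cmod (f n (ev k)) / aw l k) \<ge> 0"
      by (intro sum_nonneg divide_nonneg_pos norm_ge_zero aw_pos)
    ultimately have "(\<Sum>k<K. cmod (f n (ev k)) / aw l k) = cmod (f n x)"
      by (simp only: norm_of_real abs_of_nonneg)
    also have "\<dots> \<le> c n * Lambda_norms MM l x" using fb xV by blast
    also have "\<dots> \<le> c n * 1"
    proof (intro mult_left_mono)
      show "0 \<le> c n" using c0 by blast
      show "Lambda_norms MM l x \<le> 1" unfolding norms_eq
      proof (rule cSUP_least)
        fix i
        have "(\<lambda>k. \<alpha> k * ev k i) = (\<lambda>k. if k = i then \<alpha> k else 0)"
          by (auto simp: ev_def)
        then have "x i = (\<Sum>k<K. if k = i then \<alpha> k else 0)"
          unfolding x_def by (simp only:)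
        then have xi: "x i = (if i < K then \<alpha> i else 0)"
          by (simp add: sum.delta')
        show "cmod (x i) * aw l i \<le> 1"
        proof (cases "i < K \<and> f n (ev i) \<noteq> 0")
          case True
          then have "cmod (x i) = 1 / aw l i" using aw_pos[of l i]
            by (simp add: xi \<alpha>_def norm_divide norm_mult)
          then show ?thesis using aw_pos[of l i] by simp
        next
          case False
          then have "x i = 0" by (auto simp: xi \<alpha>_def)
          then show ?thesis by simp
        qed
      qed auto
    qed
    finally show ?thesis by simp
  qed
  show ?thesis
  proof (intro exI[of _ l] exI[of _ "suminf c"] allI)
    fix K
    have "(\<Sum>k<K. aw j k / aw l k) \<le> (\<Sum>k<K. (\<Sum>n. cmod (f n (ev k))) / aw l k)"
      using ajk aw_pos by (intro sum_mono divide_right_mono) (auto simp: less_imp_le)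
    also have "\<dots> = (\<Sum>k<K. \<Sum>n. cmod (f n (ev k)) / aw l k)"
      by (intro sum.cong refl suminf_divide[symmetric] sme)
    also have "\<dots> = (\<Sum>n. \<Sum>k<K. cmod (f n (ev k)) / aw l k)"
      by (rule suminf_sum[symmetric]) (intro summable_divide sme)
    also have "\<dots> \<le> suminf c"
    proof (rule suminf_le)
      show "summable (\<lambda>n. \<Sum>k<K. cmod (f n (ev k)) / aw l k)"
        by (intro summable_sum summable_divide sme)
    qed (use rowb cs in auto)
    finally show "(\<Sum>k<K. aw j k / aw l k) \<le> suminf c" .
  qed
qed

end



context wmx begin

lemma mu_step:
  assumes l: "lam > 0" and i: "i \<ge> 1"
  shows "MM lam i / MM lam (i - 1) \<le> MM lam (Suc i) / MM lam i"
proof -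
  have p: "MM lam i > 0" "MM lam (i - 1) > 0" "MM lam (Suc i) > 0" using pos l by auto
  have "(MM lam i)\<^sup>2 \<le> MM lam (i - 1) * MM lam (i + 1)" by (rule logconv[OF l i])
  then have "MM lam i * MM lam i \<le> MM lam (Suc i) * MM lam (i - 1)"
    by (simp add: power2_eq_square mult.commute)
  then show ?thesis using p by (simp add: divide_le_eq le_divide_eq mult.commute mult.left_commute)
qed

lemma mu_mono':
  assumes l: "lam > 0" and a: "1 \<le> a" and ab: "a \<le> b"
  shows "MM lam a / MM lam (a - 1) \<le> MM lam b / MM lam (b - 1)"
  using ab
proof (induction b rule: dec_induct)
  case base then show ?case by simp
next
  case (step n)
  have "MM lam n / MM lam (n - 1) \<le> MM lam (Suc n) / MM lam n"
    using mu_step[OF l] step a by auto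
  then show ?case using step by simp
qed

lemma W_at_mu:
  assumes l: "lam > 0" and q: "q \<ge> 1" and t: "t = MM lam q / MM lam (q - 1)"
  shows "exp (assoc_fun (MM lam) t) \<le> t ^ q / MM lam q"
proof -
  have p: "\<And>n. MM lam n > 0" using pos l by auto
  have t0: "t > 0" using p t by simp
  have up: "MM lam q * t ^ d \<le> MM lam (q + d)" for d
  proof (induction d)
    case 0 then show ?case by simp
  next
    case (Suc d)
    have mu: "t \<le> MM lam (q + Suc d) / MM lam (q + d)"
      using mu_mono'[OF l q, of "q + Suc d"] t by simp
    have "MM lam q * t ^ Suc d = t * (MM lam q * t ^ d)" by simp
    also have "\<dots> \<le> (MM lam (q + Suc d) / MM lam (q + d)) * MM lam (q + d)"
      using Suc mu t0 p by (intro mult_mono) (auto intro: less_imp_le)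
    also have "\<dots> = MM lam (q + Suc d)" using p[of "q + d"] by simp
    finally show ?case .
  qed
  have down: "d \<le> q \<Longrightarrow> MM lam q \<le> MM lam (q - d) * t ^ d" for d
  proof (induction d)
    case 0 then show ?case by simp
  next
    case (Suc d)
    have mu: "MM lam (q - d) / MM lam (q - d - 1) \<le> t"
      using mu_mono'[OF l _, of "q - d" q] t Suc.prems by simp
    have e: "q - d - 1 = q - Suc d" by simp
    have "MM lam q \<le> MM lam (q - d) * t ^ d" using Suc by simp
    also have "MM lam (q - d) = (MM lam (q - d) / MM lam (q - d - 1)) * MM lam (q - Suc d)"
      using p[of "q - d - 1"] e by simp
    also have "\<dots> * t ^ d \<le> (t * MM lam (q - Suc d)) * t ^ d"
      using mu p t0 by (intro mult_right_mono mult_right_mono) (auto intro: less_imp_le)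
    also have "\<dots> = MM lam (q - Suc d) * t ^ Suc d" by (simp add: algebra_simps)
    finally show ?case .
  qed
  have key: "t ^ n / MM lam n \<le> t ^ q / MM lam q" for n
  proof (cases "n \<ge> q")
    case True
    then obtain d where n: "n = q + d" using le_Suc_ex by blast
    have "t ^ n / MM lam n \<le> t ^ n / (MM lam q * t ^ d)"
      using up[of d] p t0 n by (intro divide_left_mono) auto
    also have "\<dots> = t ^ q / MM lam q" using t0 p[of q] n by (simp add: power_add)
    finally show ?thesis .
  next
    case False
    define d where "d = q - n"
    have n: "n = q - d" and dq: "d \<le> q" using False unfolding d_def by auto
    have "t ^ n / MM lam n \<le> t ^ n / (MM lam q / t ^ d)"
      using down[OF dq] p t0 n by (intro divide_left_mono) (auto simp: divide_le_eq)
    also have "\<dots> = t ^ (n + d) / MM lam q" using t0 p[of q] by (simp add: power_add)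
    also have "n + d = q" using n dq by simp
    finally show ?thesis .
  qed
  have "assoc_fun (MM lam) t \<le> ln (t ^ q / MM lam q)"
  proof (rule W_least)
    fix n
    show "ln (\<bar>t\<bar> ^ n / MM lam n) \<le> ln (t ^ q / MM lam q)"
      using key[of n] t0 p by (subst ln_le_cancel_iff) auto
  qed
  then show ?thesis using t0 p[of q]
    by (metis exp_le_cancel_iff exp_ln divide_pos_pos zero_less_power)
qed

end



context wmx begin

lemma claim1:
  assumes lam: "lam > 0" and jl: "1 / real (Suc j) \<le> lam"
    and S: "\<And>K. (\<Sum>k<K. aw j k / aw l k) \<le> S" and s: "s \<ge> 1"
  shows "s * exp (assoc_fun (MM lam) s) \<le> S * exp (assoc_fun (MM (1 / real (Suc l))) (2 * real (Suc l) * s))"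
proof -
  define K where "K = nat \<lceil>s\<^sup>2\<rceil>"
  define E1 where "E1 = exp (assoc_fun (MM lam) s)"
  define E2 where "E2 = exp (assoc_fun (MM (1 / real (Suc l))) (2 * real (Suc l) * s))"
  have E1p: "E1 > 0" and E2p: "E2 > 0" by (auto simp: E1_def E2_def)
  have s2: "s\<^sup>2 \<ge> s" using s by (simp add: power2_eq_square)
  have K1: "real K \<ge> s\<^sup>2" unfolding K_def by (rule real_nat_ceiling_ge)
  have K2: "real K \<le> 2 * s\<^sup>2"
  proof -
    have "real K = of_int \<lceil>s\<^sup>2\<rceil>" unfolding K_def
      by (rule of_nat_nat) (use s in \<open>simp add: less_le_trans[OF _ zero_le_power2]\<close>)
    also have "\<dots> \<le> s\<^sup>2 + 1" by simp
    finally show ?thesis using s2 s by linarith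
  qed
  have ratio: "E1 / E2 \<le> aw j k / aw l k" if k: "K \<le> k" "k < 2 * K" for k
  proof -
    have sk: "s \<le> sqrt (real k)"
    proof -
      have "s\<^sup>2 \<le> real k" using K1 k by linarith
      then show ?thesis using s by (metis real_le_rsqrt)
    qed
    have sk2: "sqrt (real k) \<le> 2 * s"
    proof -
      have "real k \<le> (2 * s)\<^sup>2" using K2 k s2 s by (simp add: power_mult_distrib)
      then show ?thesis using s by (metis real_sqrt_le_iff real_sqrt_abs abs_of_nonneg mult_nonneg_nonneg zero_le_numeral order_trans zero_le_one)
    qed
    have a1: "E1 \<le> aw j k"
    proof -
      have "assoc_fun (MM lam) s \<le> assoc_fun (MM (1 / real (Suc j))) s"
        by (rule W_mono_lam) (use jl in auto)
      also have "\<dots> \<le> assoc_fun (MM (1 / real (Suc j))) (sqrt (real k) / (1 / real (Suc j)))"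
      proof (rule W_mono_t)
        have "sqrt (real k) \<le> sqrt (real k) * real (Suc j)" using mult_left_mono[of 1 "real (Suc j)" "sqrt (real k)"] by simp
        then show "s \<le> sqrt (real k) / (1 / real (Suc j))" using sk by simp
      qed (use s in auto)
      finally show ?thesis unfolding E1_def aw_def by simp
    qed
    have a2: "aw l k \<le> E2"
    proof -
      have "assoc_fun (MM (1 / real (Suc l))) (sqrt (real k) / (1 / real (Suc l)))
          \<le> assoc_fun (MM (1 / real (Suc l))) (2 * real (Suc l) * s)"
      proof (rule W_mono_t)
        show "sqrt (real k) / (1 / real (Suc l)) \<le> 2 * real (Suc l) * s"
        proof -
          have "sqrt (real k) * real (Suc l) \<le> (2 * s) * real (Suc l)"
            using sk2 by (intro mult_right_mono) auto
          then show ?thesis by (simp add: mult.commute mult.left_commute)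
        qed
      qed auto
      then show ?thesis unfolding E2_def aw_def by simp
    qed
    show ?thesis using a1 a2 E1p E2p aw_pos[of l k]
      by (intro frac_le) auto
  qed
  have "real K * (E1 / E2) = (\<Sum>k\<in>{K..<2*K}. E1 / E2)" by simp
  also have "\<dots> \<le> (\<Sum>k\<in>{K..<2*K}. aw j k / aw l k)" by (intro sum_mono ratio) auto
  also have "\<dots> \<le> (\<Sum>k<2*K. aw j k / aw l k)"
    by (intro sum_mono2) (auto intro: less_imp_le aw_pos divide_pos_pos)
  also have "\<dots> \<le> S" by (rule S)
  finally have "real K * (E1 / E2) \<le> S" .
  moreover have "s * (E1 / E2) \<le> real K * (E1 / E2)"
    using K1 s2 E1p E2p by (intro mult_right_mono) auto
  ultimately have "s * (E1 / E2) \<le> S" by linarith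
  then have "s * E1 \<le> S * E2" using E2p by (simp add: field_simps)
  then show ?thesis unfolding E1_def E2_def .
qed

lemma bounded_cond:
  assumes B: "\<And>j. \<exists>l S. \<forall>K. (\<Sum>k<K. aw j k / aw l k) \<le> S" and lam: "lam > 0"
  shows "\<exists>\<kappa>. 0 < \<kappa> \<and> \<kappa> \<le> lam \<and> (\<exists>A\<ge>1. \<forall>p. MM \<kappa> (p + 1) \<le> A ^ (p + 1) * MM lam p)"
proof -
  define j where "j = nat \<lceil>1 / lam\<rceil>"
  have jl: "1 / real (Suc j) \<le> lam"
  proof -
    have "1 / lam \<le> real j" unfolding j_def by (rule real_nat_ceiling_ge)
    then have "1 / lam \<le> real (Suc j)" by simp
    then show ?thesis using lam by (simp add: divide_le_eq mult.commute)
  qed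
  obtain l S where S: "\<And>K. (\<Sum>k<K. aw j k / aw l k) \<le> S" using B[of j] by blast
  define k' where "k' = 1 / real (Suc l)"
  define Bc where "Bc = 2 * real (Suc l)"
  define C where "C = max 1 (max S (exp (assoc_fun (MM lam) 1)))"
  define \<kappa> where "\<kappa> = min lam k'"
  have k'p: "k' > 0" by (simp add: k'_def)
  have kp: "\<kappa> > 0" using lam k'p by (simp add: \<kappa>_def)
  have Bc1: "Bc \<ge> 1" by (simp add: Bc_def)
  have C1: "C \<ge> 1" by (simp add: C_def)
  have claim2: "s * exp (assoc_fun (MM lam) s) \<le> C * exp (assoc_fun (MM \<kappa>) (Bc * s))" if s: "s > 0" for s
  proof -
    have "s * exp (assoc_fun (MM lam) s) \<le> C * exp (assoc_fun (MM k') (Bc * s))"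
    proof (cases "s \<ge> 1")
      case True
      have "s * exp (assoc_fun (MM lam) s) \<le> S * exp (assoc_fun (MM k') (Bc * s))"
        using claim1[OF lam jl S True] by (simp add: k'_def Bc_def)
      also have "\<dots> \<le> C * exp (assoc_fun (MM k') (Bc * s))"
        by (intro mult_right_mono) (auto simp: C_def)
      finally show ?thesis .
    next
      case False
      have "s * exp (assoc_fun (MM lam) s) \<le> 1 * exp (assoc_fun (MM lam) 1)"
        using False s W_mono_t[OF lam, of s 1] by (intro mult_mono) auto
      also have "\<dots> \<le> C * 1" by (simp add: C_def)
      also have "\<dots> \<le> C * exp (assoc_fun (MM k') (Bc * s))"
        using C1 W_nonneg[OF k'p, of "Bc * s"] by (intro mult_left_mono) auto
      finally show ?thesis .
    qed
    also have "\<dots> \<le> C * exp (assoc_fun (MM \<kappa>) (Bc * s))"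
      using C1 W_mono_lam[OF kp, of k' "Bc * s"] by (intro mult_left_mono) (auto simp: \<kappa>_def)
    finally show ?thesis .
  qed
  show ?thesis
  proof (rule exI[of _ \<kappa>], intro conjI)
    show "0 < \<kappa>" by (rule kp)
    show "\<kappa> \<le> lam" by (simp add: \<kappa>_def)
  next
  show "\<exists>A\<ge>1. \<forall>p. MM \<kappa> (p + 1) \<le> A ^ (p + 1) * MM lam p"
  proof (rule exI[of _ "C * Bc"], intro conjI allI)
    show "1 \<le> C * Bc" using C1 Bc1 mult_mono[of 1 C 1 Bc] by simp
    fix p :: nat
    define q where "q = p + 1"
    have q1: "q \<ge> 1" by (simp add: q_def)
    have pM: "\<And>n. MM \<kappa> n > 0" "\<And>n. MM lam n > 0" using pos kp lam by auto
    define t where "t = MM \<kappa> q / MM \<kappa> (q - 1)"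
    have t0: "t > 0" using pM by (simp add: t_def)
    define s where "s = t / Bc"
    have s0: "s > 0" using t0 Bc1 by (simp add: s_def)
    have ts: "t = Bc * s" using Bc1 by (simp add: s_def)
    have e1: "exp (assoc_fun (MM \<kappa>) t) \<le> t ^ q / MM \<kappa> q" by (rule W_at_mu[OF kp q1 t_def])
    have e2: "s ^ p / MM lam p \<le> exp (assoc_fun (MM lam) s)"
      using W_exp_upper[OF lam, of s p] s0 by simp
    have "s * (s ^ p / MM lam p) \<le> s * exp (assoc_fun (MM lam) s)"
      using e2 s0 by (intro mult_left_mono) auto
    also have "\<dots> \<le> C * exp (assoc_fun (MM \<kappa>) t)" using claim2[OF s0] ts by simp
    also have "\<dots> \<le> C * (t ^ q / MM \<kappa> q)" using e1 C1 by (intro mult_left_mono) auto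
    finally have "s ^ q / MM lam p \<le> C * (t ^ q / MM \<kappa> q)" by (simp add: q_def)
    then have "s ^ q * MM \<kappa> q \<le> C * t ^ q * MM lam p"
      using pM[of q] pM(2)[of p] by (simp add: field_simps)
    also have "t ^ q = Bc ^ q * s ^ q" by (simp add: ts power_mult_distrib)
    finally have "s ^ q * MM \<kappa> q \<le> s ^ q * (C * Bc ^ q * MM lam p)" by (simp add: algebra_simps)
    then have "MM \<kappa> q \<le> C * Bc ^ q * MM lam p" using s0 by simp
    also have "C * Bc ^ q \<le> (C * Bc) ^ q"
    proof -
      have "C \<le> C ^ q" using C1 q1 by (simp add: power_increasing[of 1 q C, simplified])
      then have "C * Bc ^ q \<le> C ^ q * Bc ^ q" using Bc1 by (intro mult_right_mono) auto
      then show ?thesis by (simp add: power_mult_distrib)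
    qed
    then have "C * Bc ^ q * MM lam p \<le> (C * Bc) ^ q * MM lam p" using pM(2)[of p]
      by (intro mult_right_mono) auto
    finally show "MM \<kappa> (p + 1) \<le> (C * Bc) ^ (p + 1) * MM lam p" by (simp add: q_def)
  qed
  qed
qed

end


theorem theorem5p7:
  fixes MM :: "real \<Rightarrow> nat \<Rightarrow> real"
  assumes pos: "\<And>lam p. lam > 0 \<Longrightarrow> MM lam p > 0"
    and zero: "\<And>lam. lam > 0 \<Longrightarrow> MM lam 0 = 1"
    and mono: "\<And>lam \<kappa> p. 0 < lam \<Longrightarrow> lam \<le> \<kappa> \<Longrightarrow> MM lam p \<le> MM \<kappa> p"
    and logconv: "\<And>lam p. lam > 0 \<Longrightarrow> p \<ge> 1 \<Longrightarrow>
                    (MM lam p)\<^sup>2 \<le> MM lam (p - 1) * MM lam (p + 1)"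
    and root: "\<And>lam. lam > 0 \<Longrightarrow>
                 filterlim (\<lambda>p. MM lam p powr (1 / real p)) at_top sequentially"
    and mu_mono: "\<And>lam \<kappa> p. 0 < lam \<Longrightarrow> lam \<le> \<kappa> \<Longrightarrow> p \<ge> 1 \<Longrightarrow>
                    MM lam p / MM lam (p - 1) \<le> MM \<kappa> p / MM \<kappa> (p - 1)"
  shows "nuclear_lcs (Lambda_Beur MM) (Lambda_norms MM) \<longleftrightarrow>
         (\<forall>lam>0. \<exists>\<kappa>. 0 < \<kappa> \<and> \<kappa> \<le> lam \<and>
            (\<exists>A\<ge>1. \<forall>p. MM \<kappa> (p + 1) \<le> A ^ (p + 1) * MM lam p))"
  proof -
  interpret wmx MM by (rule wmx.intro[OF pos zero mono logconv root])
  show ?thesis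
  proof
    assume N: "nuclear_lcs (Lambda_Beur MM) (Lambda_norms MM)"
    show "\<forall>lam>0. \<exists>\<kappa>. 0 < \<kappa> \<and> \<kappa> \<le> lam \<and>
            (\<exists>A\<ge>1. \<forall>p. MM \<kappa> (p + 1) \<le> A ^ (p + 1) * MM lam p)"
      by (intro allI impI bounded_cond[OF nuclear_bounded[OF N]])
  next
    assume C: "\<forall>lam>0. \<exists>\<kappa>. 0 < \<kappa> \<and> \<kappa> \<le> lam \<and>
            (\<exists>A\<ge>1. \<forall>p. MM \<kappa> (p + 1) \<le> A ^ (p + 1) * MM lam p)"
    show "nuclear_lcs (Lambda_Beur MM) (Lambda_norms MM)"
      by (rule summable_nuclear) (rule cond_summable[OF C])
  qed
qed

end
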